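(* Let $Q$ be a Moufang loop. For all $a,x,y\in Q$ and all $i,j\in\mathbb Z$: $$a^{3i}x\cdot a^{3j}y=a^{3(i+j)}T_a^{-i-2j}\big(T_a^{i-j}(x)T_a^{i+2j}(y)\big)=T_a^{2i+j}\big(T_a^{i-j}(x)T_a^{i+2j}(y)\big)a^{3(i+j)},$$ $$a^{3i}x\cdot ya^{3j}=a^{3(i+j)}T_a^{-i-2j}\big(T_a^{i-j}(x)T_a^{i-j}(y)\big)=T_a^{2i+j}\big(T_a^{i-j}(x)T_a^{i-j}(y)\big)a^{3(i+j)},$$ $$xa^{3i}\cdot a^{3j}y=a^{3(i+j)}T_a^{-i-2j}\big(T_a^{-2i-j}(x)T_a^{i+2j}(y)\big)=T_a^{2i+j}\big(T_a^{-2i-j}(x)T_a^{i+2j}(y)\big)a^{3(i+j)},$$ $$xa^{3i}\cdot ya^{3j}=a^{3(i+j)}T_a^{-i-2j}\big(T_a^{-2i-j}(x)T_a^{i-j}(y)\big)=T_a^{2i+j}\big(T_a^{-2i-j}(x)T_a^{i-j}(y)\big)a^{3(i+j)}.$$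
   Context: A loop is Moufang if it satisfies $xy\cdot zx=(x\cdot yz)x$ for all $x,y,z$; Moufang loops are diassociative, so powers $a^k$ are well defined. $T_a=R_a^{-1}L_a$ where $L_a(y)=ay$, $R_a(y)=ya$; thus $T_a(x)=axa^{-1}$, and $T_a^k$ denotes the $k$-th power (inverse for negative $k$) of this permutation. Juxtaposition $uv$ binds tighter than $\cdot$. *)

theory Defs
  imports Main
begin

definition loop :: "('a \<Rightarrow> 'a \<Rightarrow> 'a) \<Rightarrow> 'a \<Rightarrow> bool" where
  "loop M e \<longleftrightarrow> (\<forall>x. M e x = x \<and> M x e = x)
     \<and> (\<forall>a b. \<exists>!x. M a x = b) \<and> (\<forall>a b. \<exists>!y. M y a = b)"

definition moufang :: "('a \<Rightarrow> 'a \<Rightarrow> 'a) \<Rightarrow> 'a \<Rightarrow> bool" where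
  "moufang M e \<longleftrightarrow> loop M e \<and>
     (\<forall>x y z. M (M x y) (M z x) = M (M x (M y z)) x)"

definition ldiv :: "('a \<Rightarrow> 'a \<Rightarrow> 'a) \<Rightarrow> 'a \<Rightarrow> 'a \<Rightarrow> 'a" where
  "ldiv M a b = (THE x. M a x = b)"

definition rdiv :: "('a \<Rightarrow> 'a \<Rightarrow> 'a) \<Rightarrow> 'a \<Rightarrow> 'a \<Rightarrow> 'a" where
  "rdiv M b a = (THE y. M y a = b)"

definition npow :: "('a \<Rightarrow> 'a \<Rightarrow> 'a) \<Rightarrow> 'a \<Rightarrow> 'a \<Rightarrow> nat \<Rightarrow> 'a" where
  "npow M e a n = (M a ^^ n) e"

definition zpow :: "('a \<Rightarrow> 'a \<Rightarrow> 'a) \<Rightarrow> 'a \<Rightarrow> 'a \<Rightarrow> int \<Rightarrow> 'a" where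
  "zpow M e a k = (if 0 \<le> k then npow M e a (nat k) else npow M e (ldiv M a e) (nat (- k)))"

definition Tmap :: "('a \<Rightarrow> 'a \<Rightarrow> 'a) \<Rightarrow> 'a \<Rightarrow> 'a \<Rightarrow> 'a" where
  "Tmap M a x = rdiv M (M a x) a"

definition Tinv :: "('a \<Rightarrow> 'a \<Rightarrow> 'a) \<Rightarrow> 'a \<Rightarrow> 'a \<Rightarrow> 'a" where
  "Tinv M a x = ldiv M a (M x a)"

definition Tpow :: "('a \<Rightarrow> 'a \<Rightarrow> 'a) \<Rightarrow> 'a \<Rightarrow> int \<Rightarrow> 'a \<Rightarrow> 'a" where
  "Tpow M a k = (if 0 \<le> k then Tmap M a ^^ nat k else Tinv M a ^^ nat (- k))"

end

theory Submission
  imports Defs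
begin

definition ipow :: "('b \<Rightarrow> 'b) \<Rightarrow> ('b \<Rightarrow> 'b) \<Rightarrow> int \<Rightarrow> 'b \<Rightarrow> 'b" where
  "ipow f g n = (if 0 \<le> n then f ^^ nat n else g ^^ nat (- n))"

lemma ipow_0[simp]: "ipow f g 0 x = x" by (simp add: ipow_def)

lemma ipow_succ:
  assumes fg: "\<And>x. f (g x) = x"
  shows "ipow f g (n+1) x = f (ipow f g n x)"
proof (cases "0 \<le> n")
  case True
  then have "nat (n+1) = Suc (nat n)" by simp
  with True show ?thesis by (simp add: ipow_def)
next
  case False
  then have h: "nat (-n) = Suc (nat (-(n+1)))" by simp
  show ?thesis
  proof (cases "n = -1")
    case True then show ?thesis using fg by (simp add: ipow_def)
  next
    case False
    with \<open>\<not> 0 \<le> n\<close> have "\<not> 0 \<le> n + 1" by simp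
    then show ?thesis using \<open>\<not> 0 \<le> n\<close> h fg by (simp add: ipow_def)
  qed
qed

lemma ipow_pred:
  assumes gf: "\<And>x. g (f x) = x"
  shows "ipow f g (n-1) x = g (ipow f g n x)"
proof (cases "1 \<le> n")
  case True
  then have "nat n = Suc (nat (n-1))" by simp
  with True show ?thesis using gf by (simp add: ipow_def)
next
  case False
  then have h: "nat (-(n-1)) = Suc (nat (-n))" by simp
  show ?thesis
  proof (cases "n = 0")
    case True then show ?thesis by (simp add: ipow_def)
  next
    case False
    with \<open>\<not> 1 \<le> n\<close> have "\<not> 0 \<le> n" by simp
    then show ?thesis using h by (simp add: ipow_def)
  qed
qed

lemma ipow_add:
  assumes fg: "\<And>x. f (g x) = x" and gf: "\<And>x. g (f x) = x"
  shows "ipow f g (m+n) x = ipow f g m (ipow f g n x)"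
proof (induct m rule: int_induct[where k=0])
  case base then show ?case by simp
next
  case (step1 i)
  have "ipow f g (i+1+n) x = ipow f g ((i+n)+1) x" by (simp add: algebra_simps)
  also have "\<dots> = f (ipow f g (i+n) x)" by (rule ipow_succ[where f=f and g=g, OF fg])
  also have "\<dots> = ipow f g (i+1) (ipow f g n x)" using step1 by (simp add: ipow_succ[where f=f and g=g, OF fg])
  finally show ?case .
next
  case (step2 i)
  have "ipow f g (i-1+n) x = ipow f g ((i+n)-1) x" by (simp add: algebra_simps)
  also have "\<dots> = g (ipow f g (i+n) x)" by (rule ipow_pred[where f=f and g=g, OF gf])
  also have "\<dots> = ipow f g (i-1) (ipow f g n x)" using step2 by (simp add: ipow_pred[where f=f and g=g, OF gf])
  finally show ?case .
qed

lemma ipow_comm: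
  assumes fg: "\<And>x. f (g x) = x" and gf: "\<And>x. g (f x) = x"
    and hf: "\<And>x. h (f x) = f (h x)"
  shows "h (ipow f g n x) = ipow f g n (h x)"
proof -
  have hg: "h (g y) = g (h y)" for y
  proof -
    have "h (g y) = g (f (h (g y)))" by (simp add: gf)
    also have "\<dots> = g (h (f (g y)))" by (simp add: hf)
    also have "\<dots> = g (h y)" by (simp add: fg)
    finally show ?thesis .
  qed
  show ?thesis
  proof (induct n rule: int_induct[where k=0])
    case base then show ?case by simp
  next
    case (step1 i) then show ?case by (simp add: ipow_succ[where f=f and g=g, OF fg] hf)
  next
    case (step2 i) then show ?case by (simp add: ipow_pred[where f=f and g=g, OF gf] hg)
  qed
qed

locale mloop =
  fixes M :: "'a \<Rightarrow> 'a \<Rightarrow> 'a" and e :: 'a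
  assumes mf: "moufang M e"
begin

lemma lp: "loop M e" using mf by (simp add: moufang_def)
lemma hl: "\<exists>!x. M a x = b" using lp unfolding loop_def by simp
lemma hr: "\<exists>!x. M x a = b" using lp unfolding loop_def by simp
lemma mid: "M (M x y) (M z x) = M (M x (M y z)) x" using mf by (simp add: moufang_def)
lemma el[simp]: "M e x = x" and er[simp]: "M x e = x" using lp by (auto simp: loop_def)
lemma lcan: assumes "M a x = M a y" shows "x = y"
proof -
  have "\<exists>!z. M a z = M a x" by (rule hl)
  then show ?thesis using assms by (metis (mono_tags))
qed
lemma rcan: assumes "M x a = M y a" shows "x = y"
proof -
  have "\<exists>!z. M z a = M x a" by (rule hr)
  then show ?thesis using assms by (metis (mono_tags))
qed
lemma ldiv1: "M a (ldiv M a b) = b"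
  proof -
  have "\<exists>!z. M a z = b" by (rule hl)
  then show ?thesis unfolding ldiv_def by (rule theI')
qed
lemma rdiv1: "M (rdiv M b a) a = b"
  proof -
  have "\<exists>!z. M z a = b" by (rule hr)
  then show ?thesis unfolding rdiv_def by (rule theI')
qed

definition inv where "inv a = ldiv M a e"
lemma inv_r[simp]: "M a (inv a) = e" by (simp add: inv_def ldiv1)
lemma flex: "M x (M z x) = M (M x z) x" using mid[of x e z] by simp
lemma lip1[simp]: "M x (M (inv x) z) = z"
proof -
  have "M (M x (inv x)) (M z x) = M (M x (M (inv x) z)) x" by (rule mid)
  then have "M z x = M (M x (M (inv x) z)) x" by simp
  then show ?thesis by (rule rcan[symmetric])
qed
lemma inv_l[simp]: "M (inv x) x = e"
  using lip1[of x x] by (metis er lcan)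
lemma lip2[simp]: "M (inv x) (M x z) = z"
  using lip1[of x "M x z"] by (metis lcan)
lemma rip1[simp]: "M (M y (inv x)) x = y"
proof -
  have "M (M x y) (M (inv x) x) = M (M x (M y (inv x))) x" by (rule mid)
  then have "M x y = M x (M (M y (inv x)) x)" by (simp add: flex)
  then show ?thesis by (rule lcan[symmetric])
qed
lemma rip2[simp]: "M (M y x) (inv x) = y"
  using rip1[of "M y x" x] by (metis rcan)
lemma inv_inv[simp]: "inv (inv x) = x"
  using inv_r[of "inv x"] inv_l[of x] by (metis lcan)
lemma aaip: "inv (M x y) = M (inv y) (inv x)"
proof -
  have "M (M x y) (inv y) = x" by simp
  then have "M (inv (M x y)) x = inv y" using lip2[of "M x y" "inv y"] by simp
  then have "M (inv y) (inv x) = M (M (inv (M x y)) x) (inv x)" by simp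
  then show ?thesis by simp
qed

lemma alpha: "M (M a u) (M v a) = M a (M (M u v) a)"
  by (simp add: mid flex)

lemma gamma: "M (M u (inv a)) (M a (M v a)) = M (M u v) a"
proof -
  have h: "M (M a (inv u)) (M (M u v) a) = M a (M v a)"
    using alpha[of a "inv u" "M u v"] by simp
  have "M (inv (M a (inv u))) (M (M a (inv u)) (M (M u v) a)) = M (M u v) a" by simp
  then show ?thesis using h by (simp add: aaip)
qed

lemma ldiv_eq: "ldiv M a b = M (inv a) b"
  using ldiv1[of a b] lip1[of a b] by (metis lcan)
lemma rdiv_eq: "rdiv M b a = M b (inv a)"
  using rdiv1[of b a] rip1[of b a] by (metis rcan)


definition Lp where "Lp a n = ipow (M a) (M (inv a)) n"
definition Rp where "Rp a n = ipow (\<lambda>z. M z a) (\<lambda>z. M z (inv a)) n"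
definition Phi where "Phi a p q x = Lp a p (Rp a q x)"

lemma Lp_add: "Lp a (m+n) x = Lp a m (Lp a n x)"
  unfolding Lp_def by (rule ipow_add) simp_all
lemma Rp_add: "Rp a (m+n) x = Rp a m (Rp a n x)"
  unfolding Rp_def by (rule ipow_add) simp_all
lemma R_Lp: "M (Lp a p x) a = Lp a p (M x a)"
  unfolding Lp_def by (rule ipow_comm) (simp_all add: flex)
lemma LR_comm: "Lp a p (Rp a q x) = Rp a q (Lp a p x)"
  unfolding Rp_def by (rule ipow_comm) (simp_all add: R_Lp)
lemma Phi_add: "Phi a p q (Phi a p' q' x) = Phi a (p+p') (q+q') x"
  unfolding Phi_def by (simp add: Lp_add Rp_add LR_comm)
lemma Phi_00[simp]: "Phi a 0 0 x = x"
  by (simp add: Phi_def Lp_def Rp_def)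
lemma Phi_10: "Phi a 1 0 x = M a x"
  by (simp add: Phi_def Lp_def Rp_def ipow_def)
lemma Phi_01: "Phi a 0 1 x = M x a"
  by (simp add: Phi_def Lp_def Rp_def ipow_def)
lemma Phi_11: "Phi a 1 1 x = M a (M x a)"
  by (simp add: Phi_def Lp_def Rp_def ipow_def)
lemma Phi_0m: "Phi a 0 (-1) x = M x (inv a)"
  by (simp add: Phi_def Lp_def Rp_def ipow_def)

definition Atp where "Atp a p1 q1 p2 q2 p3 q3 \<longleftrightarrow>
   (\<forall>u v. M (Phi a p1 q1 u) (Phi a p2 q2 v) = Phi a p3 q3 (M u v))"

lemma Atp_add: "Atp a p1 q1 p2 q2 p3 q3 \<Longrightarrow> Atp a p1' q1' p2' q2' p3' q3' \<Longrightarrow>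
   Atp a (p1+p1') (q1+q1') (p2+p2') (q2+q2') (p3+p3') (q3+q3')"
  unfolding Atp_def by (simp add: Phi_add[symmetric])

lemma Atp_neg: assumes "Atp a p1 q1 p2 q2 p3 q3"
  shows "Atp a (-p1) (-q1) (-p2) (-q2) (-p3) (-q3)"
  unfolding Atp_def
proof (intro allI)
  fix u v
  have "M (Phi a (-p1) (-q1) u) (Phi a (-p2) (-q2) v)
     = Phi a (-p3) (-q3) (Phi a p3 q3 (M (Phi a (-p1) (-q1) u) (Phi a (-p2) (-q2) v)))"
    by (simp add: Phi_add)
  also have "\<dots> = Phi a (-p3) (-q3) (M u v)"
  proof -
    have "M (Phi a p1 q1 (Phi a (-p1) (-q1) u)) (Phi a p2 q2 (Phi a (-p2) (-q2) v))
       = Phi a p3 q3 (M (Phi a (-p1) (-q1) u) (Phi a (-p2) (-q2) v))"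
      using assms unfolding Atp_def by blast
    then show ?thesis by (simp add: Phi_add)
  qed
  finally show "M (Phi a (-p1) (-q1) u) (Phi a (-p2) (-q2) v) = Phi a (-p3) (-q3) (M u v)" .
qed

lemma Atp_0: "Atp a 0 0 0 0 0 0" by (simp add: Atp_def)

lemma Atp_mult: assumes "Atp a p1 q1 p2 q2 p3 q3"
  shows "Atp a (n*p1) (n*q1) (n*p2) (n*q2) (n*p3) (n*q3)"
proof (induct n rule: int_induct[where k=0])
  case base then show ?case by (simp add: Atp_0)
next
  case (step1 i) then show ?case using Atp_add[OF step1(2) assms] by (simp add: algebra_simps)
next
  case (step2 i) then show ?case using Atp_add[OF step2(2) Atp_neg[OF assms]] by (simp add: algebra_simps)
qed

lemma Atp_alpha: "Atp a 1 0 0 1 1 1"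
  unfolding Atp_def by (simp add: Phi_10 Phi_01 Phi_11 alpha)
lemma Atp_gamma: "Atp a 0 (-1) 1 1 0 1"
  unfolding Atp_def by (simp add: Phi_0m Phi_01 Phi_11 gamma)

lemma Atp_gen: "Atp a p (-q) q (p+q) p (p+q)"
  using Atp_add[OF Atp_mult[OF Atp_alpha, where n=p] Atp_mult[OF Atp_gamma, where n=q]] by simp

lemma key:
  assumes "p1 = p3 + r1" "q1 = p3 - q3 + s1" "p2 = q3 - p3 + r2" "q2 = q3 + s2"
  shows "M (Phi a p1 q1 u) (Phi a p2 q2 v) = Phi a p3 q3 (M (Phi a r1 s1 u) (Phi a r2 s2 v))"
proof -
  have "M (Phi a p3 (-(q3-p3)) (Phi a r1 s1 u)) (Phi a (q3-p3) (p3+(q3-p3)) (Phi a r2 s2 v))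
    = Phi a p3 (p3+(q3-p3)) (M (Phi a r1 s1 u) (Phi a r2 s2 v))"
    using Atp_gen[of a p3 "q3-p3"] unfolding Atp_def by blast
  then show ?thesis unfolding assms by (simp add: Phi_add algebra_simps)
qed

lemma zpow_Phi: "zpow M e a n = Phi a n 0 e"
  by (simp add: zpow_def Phi_def Lp_def Rp_def ipow_def npow_def inv_def)

lemma zpow_l: "M (zpow M e a n) x = Phi a n 0 x"
proof -
  have "M (Phi a n 0 e) (Phi a 0 0 x) = Phi a n n (M (Phi a 0 0 e) (Phi a 0 (-n) x))"
    by (rule key) simp_all
  then show ?thesis by (simp add: zpow_Phi Phi_add)
qed

lemma zpow_r: "M x (zpow M e a n) = Phi a 0 n x"
proof -
  have "M (Phi a 0 0 x) (Phi a n 0 e) = Phi a (-n) 0 (M (Phi a n n x) (Phi a 0 0 e))"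
    by (rule key) simp_all
  then show ?thesis by (simp add: zpow_Phi Phi_add)
qed

lemma Tmap_Phi: "Tmap M a x = Phi a 1 (-1) x"
proof -
  have "Phi a 1 (-1) x = Phi a 0 (-1) (Phi a 1 0 x)" by (simp add: Phi_add)
  then show ?thesis by (simp add: Tmap_def rdiv_eq Phi_0m Phi_10)
qed

lemma Tinv_Phi: "Tinv M a x = Phi a (-1) 1 x"
proof -
  have "Phi a (-1) 1 x = Phi a (-1) 0 (Phi a 0 1 x)" by (simp add: Phi_add)
  then show ?thesis by (simp add: Tinv_def ldiv_eq Phi_01 Phi_def Lp_def Rp_def ipow_def)
qed

lemma Tpow_Phi: "Tpow M a k x = Phi a k (-k) x"
proof -
  have A: "(Tmap M a ^^ n) x = Phi a (int n) (- int n) x" for n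
    by (induct n) (simp_all add: Tmap_Phi Phi_add algebra_simps)
  have B: "(Tinv M a ^^ n) x = Phi a (- int n) (int n) x" for n
    by (induct n) (simp_all add: Tinv_Phi Phi_add algebra_simps)
  show ?thesis
    by (cases "0 \<le> k") (simp_all add: Tpow_def A B)
qed

end

theorem mainTheorem10:
  fixes M :: "'a \<Rightarrow> 'a \<Rightarrow> 'a" and e :: 'a
  assumes "moufang M e"
  shows "\<forall>a x y. \<forall>i j :: int.
    M (M (zpow M e a (3*i)) x) (M (zpow M e a (3*j)) y)
      = M (zpow M e a (3*(i+j))) (Tpow M a (-i-2*j) (M (Tpow M a (i-j) x) (Tpow M a (i+2*j) y)))
  \<and> M (M (zpow M e a (3*i)) x) (M (zpow M e a (3*j)) y)
      = M (Tpow M a (2*i+j) (M (Tpow M a (i-j) x) (Tpow M a (i+2*j) y))) (zpow M e a (3*(i+j)))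
  \<and> M (M (zpow M e a (3*i)) x) (M y (zpow M e a (3*j)))
      = M (zpow M e a (3*(i+j))) (Tpow M a (-i-2*j) (M (Tpow M a (i-j) x) (Tpow M a (i-j) y)))
  \<and> M (M (zpow M e a (3*i)) x) (M y (zpow M e a (3*j)))
      = M (Tpow M a (2*i+j) (M (Tpow M a (i-j) x) (Tpow M a (i-j) y))) (zpow M e a (3*(i+j)))
  \<and> M (M x (zpow M e a (3*i))) (M (zpow M e a (3*j)) y)
      = M (zpow M e a (3*(i+j))) (Tpow M a (-i-2*j) (M (Tpow M a (-2*i-j) x) (Tpow M a (i+2*j) y)))
  \<and> M (M x (zpow M e a (3*i))) (M (zpow M e a (3*j)) y)
      = M (Tpow M a (2*i+j) (M (Tpow M a (-2*i-j) x) (Tpow M a (i+2*j) y))) (zpow M e a (3*(i+j)))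
  \<and> M (M x (zpow M e a (3*i))) (M y (zpow M e a (3*j)))
      = M (zpow M e a (3*(i+j))) (Tpow M a (-i-2*j) (M (Tpow M a (-2*i-j) x) (Tpow M a (i-j) y)))
  \<and> M (M x (zpow M e a (3*i))) (M y (zpow M e a (3*j)))
      = M (Tpow M a (2*i+j) (M (Tpow M a (-2*i-j) x) (Tpow M a (i-j) y))) (zpow M e a (3*(i+j)))"
proof -
  interpret mloop M e using assms by unfold_locales
  show ?thesis
    apply (intro allI)
    apply (simp only: zpow_l zpow_r Tpow_Phi Phi_add)
    apply (intro conjI)
           apply (rule key; simp add: algebra_simps)+
    done
qed

end
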